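(* Let $N,n_h,n_l$ be positive integers, $r\in\mathbb{R}^N$, and $R\in\mathbb{R}^{N\times n_h}$ with $R_{t,k}=r_{t-k+1}$ for $t\ge k$ and $R_{t,k}=0$ otherwise; assume $R^\top R$ is invertible. Let $\sigma^2>0$, $E:=R(R^\top R)^{-2}R^\top$ and $c:=\mathrm{tr}(\sigma^2(R^\top R)^{-1})$. For $l=(l_0,\dots,l_{n_l-1})^\top$ let $L(l)\in\mathbb{R}^{N\times(N+n_l-1)}$ have entries $L_{t,s}=l_{t+n_l-1-s}$ if $0\le t+n_l-1-s\le n_l-1$ and $0$ otherwise, let $Q_l$ be the $0/1$ selection matrix with $\mathrm{vec}(L(l))=Q_l l$ (column stacking), and set $M:=Q_l^\top(I_{N+n_l-1}\otimes E)Q_l$. Let $\gamma_2>0$, let $\lambda_1\ge\lambda_2\ge\dots\ge\lambda_{n_l}\ge0$ be the eigenvalues of $M$ and $v_1$ a unit-norm eigenvector for $\lambda_1$. Then a minimizer over $l\in\mathbb{R}^{n_l}$ of $(l^\top M l+c)^{-1}+\gamma_2\|l\|^2$ is $l^*=0$ if $\lambda_1\le\gamma_2c^2$, and $l^*=\sqrt{1/\sqrt{\gamma_2\lambda_1}-c/\lambda_1}\;v_1$ otherwise.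
   Context: $\otimes$ is the Kronecker product and $\|\cdot\|$ the Euclidean norm. $\gamma_2$ weights output-variance degradation against the (inverse) identification error. *)

theory Defs
  imports "Jordan_Normal_Form.Char_Poly" "Jordan_Normal_Form.Gauss_Jordan_Elimination"
begin

definition mtrace :: "real mat \<Rightarrow> real" where
  "mtrace A = (\<Sum>i<dim_row A. A $$ (i, i))"

definition minv :: "real mat \<Rightarrow> real mat" where
  "minv A = the (mat_inverse A)"

definition kron :: "real mat \<Rightarrow> real mat \<Rightarrow> real mat" where
  "kron A B = mat (dim_row A * dim_row B) (dim_col A * dim_col B)
     (\<lambda>(i, j). A $$ (i div dim_row B, j div dim_col B) * B $$ (i mod dim_row B, j mod dim_col B))"

(* column-stacking vectorisation: entry (t,s) goes to position t + nrows * s *)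
definition vec_cs :: "real mat \<Rightarrow> real vec" where
  "vec_cs A = vec (dim_row A * dim_col A) (\<lambda>i. A $$ (i mod dim_row A, i div dim_row A))"

(* the regressor (Toeplitz) matrix R, 0-based: R_{t,k} = r_{t-k} for t \<ge> k *)
definition Rmat :: "nat \<Rightarrow> nat \<Rightarrow> real vec \<Rightarrow> real mat" where
  "Rmat N nh r = mat N nh (\<lambda>(t, k). if k \<le> t then r $ (t - k) else 0)"

definition Lmat :: "nat \<Rightarrow> nat \<Rightarrow> real vec \<Rightarrow> real mat" where
  "Lmat N nl l = mat N (N + nl - 1)
     (\<lambda>(t, s). if s \<le> t + nl - 1 \<and> t + nl - 1 - s \<le> nl - 1 then l $ (t + nl - 1 - s) else 0)"

definition Emat :: "nat \<Rightarrow> nat \<Rightarrow> real vec \<Rightarrow> real mat" where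
  "Emat N nh r = (let R = Rmat N nh r; G = minv (transpose_mat R * R)
                  in R * (G * G) * transpose_mat R)"

definition Mmat :: "nat \<Rightarrow> nat \<Rightarrow> nat \<Rightarrow> real vec \<Rightarrow> real mat \<Rightarrow> real mat" where
  "Mmat N nh nl r Q = transpose_mat Q * kron (1\<^sub>m (N + nl - 1)) (Emat N nh r) * Q"

end

theory Submission
  imports Defs "HOL-Analysis.Function_Topology"
begin


lemma cont_coord[continuous_intros]: "continuous_on S (\<lambda>x::nat\<Rightarrow>real. x i)"
  by (rule continuous_on_subset[OF continuous_on_product_coordinates]) simp

lemma compact_cube: "compact {x::nat\<Rightarrow>real. \<forall>i. x i \<in> {-1..1}}"
proof -
  have e: "{x::nat\<Rightarrow>real. \<forall>i. x i \<in> {-1..1}} = PiE UNIV (\<lambda>_. {-1..1})"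
    by (auto simp: PiE_def Pi_def extensional_def)
  have "compactin (product_topology (\<lambda>_. euclidean) UNIV) (PiE UNIV (\<lambda>_::nat. {-1..1::real}))"
    by (subst compactin_PiE) (auto simp: compactin_euclidean_iff)
  then show ?thesis unfolding e euclidean_product_topology compactin_euclidean_iff .
qed

lemma quad_max:
  fixes m :: "nat \<Rightarrow> nat \<Rightarrow> real" and n :: nat
  assumes "n > 0"
  shows "\<exists>x0. (\<Sum>i<n. (x0 i)^2) = 1 \<and> (\<forall>x. (\<Sum>i<n. (x i)^2) = 1 \<longrightarrow>
     (\<Sum>i<n. \<Sum>j<n. m i j * x i * x j) \<le> (\<Sum>i<n. \<Sum>j<n. m i j * x0 i * x0 j))"
proof -
  let ?S = "{x::nat\<Rightarrow>real. \<forall>i. x i \<in> {-1..1}} \<inter> {x. (\<Sum>i<n. (x i)^2) = 1}"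
  let ?q = "\<lambda>x::nat\<Rightarrow>real. (\<Sum>i<n. \<Sum>j<n. m i j * x i * x j)"
  have cl: "closed {x::nat\<Rightarrow>real. (\<Sum>i<n. (x i)^2) = 1}"
    by (intro closed_Collect_eq continuous_intros)
  have cS: "compact ?S" using compact_cube cl by (rule compact_Int_closed)
  have ne: "(\<lambda>i. if i = 0 then 1 else 0) \<in> ?S" using assms
    by (auto simp: power2_eq_square if_distrib cong: if_cong)
  have cont: "continuous_on ?S ?q" by (intro continuous_intros)
  have neS: "?S \<noteq> {}" using ne by (subst ex_in_conv[symmetric]) (rule exI)
  have "\<exists>x\<in>?S. \<forall>y\<in>?S. ?q y \<le> ?q x"
    by (rule continuous_attains_sup[OF cS neS cont])
  then obtain x0 where x0: "x0 \<in> ?S" and mx0: "\<forall>y\<in>?S. ?q y \<le> ?q x0"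
    by (rule bexE)
  have mx: "?q y \<le> ?q x0" if "y \<in> ?S" for y using mx0 that by (rule bspec)
  show ?thesis
  proof (intro exI conjI allI impI)
    show "(\<Sum>i<n. (x0 i)^2) = 1" using x0 by auto
    fix x :: "nat \<Rightarrow> real" assume x: "(\<Sum>i<n. (x i)^2) = 1"
    define y where "y = (\<lambda>i. if i < n then x i else 0)"
    have sy: "(\<Sum>i<n. (y i)^2) = 1" using x unfolding y_def by simp
    have "y i \<in> {-1..1}" for i
    proof (cases "i < n")
      case True
      have "(y i)^2 \<le> (\<Sum>i<n. (y i)^2)"
        using True by (intro member_le_sum) auto
      then have "(y i)^2 \<le> 1" using sy by simp
      then have "\<bar>y i\<bar> \<le> 1" by (simp add: abs_square_le_1)
      then show ?thesis by (simp add: abs_le_iff)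
    qed (simp add: y_def)
    then have yin: "\<forall>i. y i \<in> {-1..1}" by blast
    have "y \<in> ?S" using yin sy by (intro IntI CollectI)
    then have "?q y \<le> ?q x0" by (rule mx)
    moreover have "?q y = ?q x" unfolding y_def by simp
    ultimately show "?q x \<le> ?q x0" by simp
  qed
qed

lemma rayleigh_sum:
  fixes m :: "nat \<Rightarrow> nat \<Rightarrow> real" and n :: nat and lam :: real
  assumes sym: "\<And>i j. i < n \<Longrightarrow> j < n \<Longrightarrow> m i j = m j i"
    and ev: "\<And>mu x. (\<Sum>i<n. (x i)^2) = 1 \<Longrightarrow>
               (\<And>i. i < n \<Longrightarrow> (\<Sum>j<n. m i j * x j) = mu * x i) \<Longrightarrow> mu \<le> lam"
  shows "(\<Sum>i<n. \<Sum>j<n. m i j * y i * y j) \<le> lam * (\<Sum>i<n. (y i)^2)"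
proof (cases "n = 0")
  case True then show ?thesis by simp
next
  case False
  define q where "q = (\<lambda>x::nat\<Rightarrow>real. (\<Sum>i<n. \<Sum>j<n. m i j * x i * x j))"
  define nrm where "nrm = (\<lambda>x::nat\<Rightarrow>real. (\<Sum>i<n. (x i)^2))"
  have nrm_nn: "nrm x \<ge> 0" for x unfolding nrm_def by (intro sum_nonneg) auto
  obtain x0 where x0: "nrm x0 = 1" and mx: "\<And>x. nrm x = 1 \<Longrightarrow> q x \<le> q x0"
    using quad_max[of n m] False unfolding q_def nrm_def by auto
  define mu where "mu = q x0"
  have bound: "q y \<le> mu * nrm y" for y
  proof (cases "nrm y = 0")
    case True
    then have "\<forall>i\<in>{..<n}. (y i)^2 = 0" unfolding nrm_def
      by (subst sum_nonneg_eq_0_iff[symmetric]) auto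
    then have "\<forall>i<n. y i = 0" by auto
    then have "q y = 0" unfolding q_def by simp
    then show ?thesis using True by simp
  next
    case False
    define t where "t = sqrt (nrm y)"
    have tpos: "t > 0" unfolding t_def using False nrm_nn[of y] by auto
    have t2: "t^2 = nrm y" unfolding t_def using nrm_nn[of y] by simp
    define z where "z = (\<lambda>i. y i / t)"
    have "nrm z = nrm y / t^2" unfolding nrm_def z_def
      by (simp add: power_divide sum_divide_distrib)
    then have "nrm z = 1" using t2 False by simp
    then have "q z \<le> mu" using mx mu_def by simp
    moreover have "q z = q y / t^2" unfolding q_def z_def
      by (simp add: sum_divide_distrib power2_eq_square)
    ultimately have "q y / t^2 \<le> mu" by simp
    then have "q y \<le> mu * t^2" using tpos by (simp add: divide_le_eq)
    then show ?thesis using t2 by simp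
  qed
  define F where "F = (\<lambda>y. mu * nrm y - q y)"
  have Fnn: "F y \<ge> 0" for y using bound[of y] unfolding F_def by simp
  have F0: "F x0 = 0" unfolding F_def mu_def using x0 by simp
  define d where "d = (\<lambda>i. mu * x0 i - (\<Sum>j<n. m i j * x0 j))"
  define D where "D = (\<Sum>i<n. d i * d i)"
  have Dnn: "D \<ge> 0" unfolding D_def by (intro sum_nonneg) auto
  have e1: "nrm (\<lambda>i. x0 i + t * d i) = nrm x0 + 2 * t * (\<Sum>i<n. x0 i * d i) + t^2 * nrm d" for t
    unfolding nrm_def
    by (simp add: power2_eq_square algebra_simps sum.distrib sum_distrib_left)
  have e2: "q (\<lambda>i. x0 i + t * d i) = q x0 + t * (\<Sum>i<n. \<Sum>j<n. m i j * x0 i * d j)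
      + t * (\<Sum>i<n. \<Sum>j<n. m i j * d i * x0 j) + t^2 * q d" for t
    unfolding q_def
    by (simp add: power2_eq_square algebra_simps sum.distrib sum_distrib_left)
  have e3: "(\<Sum>i<n. \<Sum>j<n. m i j * d i * x0 j) = (\<Sum>i<n. d i * (\<Sum>j<n. m i j * x0 j))"
    by (simp add: sum_distrib_left algebra_simps)
  have e4: "(\<Sum>i<n. \<Sum>j<n. m i j * x0 i * d j) = (\<Sum>i<n. \<Sum>j<n. m i j * d i * x0 j)"
  proof -
    have "(\<Sum>i<n. \<Sum>j<n. m i j * x0 i * d j) = (\<Sum>j<n. \<Sum>i<n. m i j * x0 i * d j)"
      by (rule sum.swap)
    also have "\<dots> = (\<Sum>j<n. \<Sum>i<n. m j i * d j * x0 i)"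
      by (intro sum.cong refl) (simp add: sym)
    finally show ?thesis .
  qed
  have e5: "mu * (\<Sum>i<n. x0 i * d i) - (\<Sum>i<n. d i * (\<Sum>j<n. m i j * x0 j)) = D"
    unfolding D_def d_def
    by (simp add: sum_distrib_left sum_subtractf[symmetric] algebra_simps)
  have exp: "F (\<lambda>i. x0 i + t * d i) = 2 * t * D + t^2 * F d" for t
  proof -
    have "F (\<lambda>i. x0 i + t * d i) = F x0 + 2 * t * (mu * (\<Sum>i<n. x0 i * d i)
       - (\<Sum>i<n. d i * (\<Sum>j<n. m i j * x0 j))) + t^2 * F d"
      unfolding F_def e1 e2 e4 e3 by (simp add: algebra_simps)
    then show ?thesis using F0 e5 by simp
  qed
  have D0: "D = 0"
  proof (rule ccontr)
    assume "D \<noteq> 0"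
    then have Dp: "D > 0" using Dnn by simp
    define t where "t = - D / (F d + 1)"
    have fp: "F d + 1 > 0" using Fnn[of d] by simp
    have h0: "0 \<le> 2 * t * D + t^2 * F d" using Fnn[of "\<lambda>i. x0 i + t * d i"] exp[of t] by simp
    have tn: "t < 0" unfolding t_def using Dp fp by (simp add: divide_pos_pos)
    have "t * F d = - D * (F d / (F d + 1))" by (simp add: t_def)
    moreover have "F d / (F d + 1) \<le> 1" using fp by simp
    moreover have "D * (F d / (F d + 1)) \<le> D * 1"
      using \<open>F d / (F d + 1) \<le> 1\<close> Dp by (intro mult_left_mono) auto
    ultimately have "t * F d \<ge> - D" by simp
    then have "2 * D + t * F d > 0" using Dp by simp
    then have "t * (2 * D + t * F d) < 0" using tn by (simp add: mult_neg_pos)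
    moreover have "2 * t * D + t^2 * F d = t * (2 * D + t * F d)" by (simp add: power2_eq_square algebra_simps)
    ultimately show False using h0 by simp
  qed
  have "\<forall>i\<in>{..<n}. d i * d i = 0" using D0 unfolding D_def
    by (subst sum_nonneg_eq_0_iff[symmetric]) auto
  then have "\<And>i. i < n \<Longrightarrow> (\<Sum>j<n. m i j * x0 j) = mu * x0 i"
    unfolding d_def by auto
  then have "mu \<le> lam" using ev[of x0 mu] x0 unfolding nrm_def by blast
  then have "mu * nrm y \<le> lam * nrm y" using nrm_nn[of y] by (rule mult_right_mono)
  then show ?thesis using bound[of y] unfolding q_def nrm_def by simp
qed



lemma arith_a:
  fixes c g lam q x :: real
  assumes c: "c > 0" and g: "g > 0" and lam: "lam \<ge> 0" and q: "0 \<le> q" "q \<le> lam * x" and x: "x \<ge> 0"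
    and le: "lam \<le> g * c^2"
  shows "1 / c \<le> 1 / (q + c) + g * x"
proof -
  have u: "lam * x + c > 0" using lam x c by (simp add: add_nonneg_pos)
  have "1 / (lam * x + c) \<le> 1 / (q + c)" using q c by (intro divide_left_mono) auto
  moreover have "1 / c \<le> 1 / (lam * x + c) + g * x"
  proof -
    have "lam * x \<le> g * c^2 * x" using le x by (rule mult_right_mono)
    also have "\<dots> \<le> g * x * c * (lam * x + c)"
      using g x c lam by (simp add: power2_eq_square mult_left_mono mult_right_mono algebra_simps)
    finally have "lam * x + c \<le> c + g * x * c * (lam * x + c)" by simp
    then have nn: "0 \<le> (c + g * x * c * (lam * x + c) - (lam * x + c)) / (c * (lam * x + c))"
      using c u by (intro divide_nonneg_pos) auto
    have "1 / (lam * x + c) + g * x - 1 / c = (c + g * x * c * (lam * x + c) - (lam * x + c)) / (c * (lam * x + c))"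
      using c u by (simp add: field_simps)
    then show ?thesis using nn by linarith
  qed
  ultimately show ?thesis by simp
qed

lemma arith_b:
  fixes c g lam q x :: real
  assumes c: "c > 0" and g: "g > 0" and q: "0 \<le> q" "q \<le> lam * x" and x: "x \<ge> 0"
    and gt: "\<not> lam \<le> g * c^2"
  shows "1 / ((sqrt (1 / sqrt (g * lam) - c / lam))^2 * lam + c) + g * (sqrt (1 / sqrt (g * lam) - c / lam))^2
     \<le> 1 / (q + c) + g * x"
proof -
  have lp: "lam > 0" using gt g by (smt (verit) zero_less_power mult_pos_pos c)
  define w where "w = sqrt (lam / g)"
  have wp: "w > 0" unfolding w_def using lp g by simp
  have w2: "w^2 = lam / g" unfolding w_def using lp g by simp
  have lamw: "lam = g * w^2" using w2 g by (simp add: field_simps)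
  have glw: "g * lam = (g * w)^2" by (simp add: lamw power2_eq_square)
  have sq0: "sqrt ((g * w)^2) = g * w" using g wp by simp
  have sq: "sqrt (g * lam) = g * w" using sq0 glw by metis
  have "g * c^2 < g * w^2" using gt lamw by simp
  then have "c^2 < w^2" using g by (simp add: mult_less_cancel_left_pos)
  then have cw: "c < w" using wp c by (smt (verit) power_mono)
  have s2: "1 / sqrt (g * lam) - c / lam = (w - c) / (g * w^2)"
    unfolding sq unfolding lamw using g wp by (simp add: field_simps power2_eq_square)
  have nn: "(w - c) / (g * w^2) \<ge> 0" using cw g wp by simp
  have L: "1 / ((sqrt (1 / sqrt (g * lam) - c / lam))^2 * lam + c) + g * (sqrt (1 / sqrt (g * lam) - c / lam))^2
       = 2 / w - c / w^2"
    unfolding s2 using nn g wp unfolding lamw by (simp add: field_simps power2_eq_square)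
  define u where "u = lam * x + c"
  have up: "u > 0" unfolding u_def using lp x c by (simp add: add_nonneg_pos)
  have "1 / u \<le> 1 / (q + c)" unfolding u_def using q c by (intro divide_left_mono) auto
  moreover have "g * x = (u - c) / w^2" unfolding u_def lamw using g wp by (simp add: field_simps)
  moreover have "2 / w - c / w^2 \<le> 1 / u + (u - c) / w^2"
  proof -
    have "0 \<le> (u - w)^2" by simp
    then have "2 * u * w \<le> w^2 + u^2" unfolding power2_diff by linarith
    then have "2 * u * w / (u * w^2) \<le> (w^2 + u^2) / (u * w^2)"
      using up wp by (intro divide_right_mono) auto
    then show ?thesis using up wp by (simp add: field_simps power2_eq_square)
  qed
  ultimately show ?thesis using L by simp
qed

lemma qf_sum:
  fixes A :: "real mat"
  assumes A: "A \<in> carrier_mat n n" and x: "x \<in> carrier_vec n"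
  shows "x \<bullet> (A *\<^sub>v x) = (\<Sum>i<n. \<Sum>j<n. A $$ (i, j) * x $ i * x $ j)"
  using A x by (simp add: scalar_prod_def row_def lessThan_atLeast0 sum_distrib_left algebra_simps)

lemma nrm_sum:
  fixes x :: "real vec"
  assumes x: "x \<in> carrier_vec n"
  shows "x \<bullet> x = (\<Sum>i<n. (x $ i)^2)"
  using x by (simp add: scalar_prod_def lessThan_atLeast0 power2_eq_square)

lemma psd_sum:
  fixes w :: "'s \<Rightarrow> nat \<Rightarrow> real"
  assumes "finite P"
  shows "(\<Sum>i<n. \<Sum>j<n. (\<Sum>s\<in>P. w s i * w s j) * y i * y j) \<ge> 0"
proof -
  have "(\<Sum>i<n. \<Sum>j<n. (\<Sum>s\<in>P. w s i * w s j) * y i * y j)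
      = (\<Sum>i<n. \<Sum>j<n. \<Sum>s\<in>P. (w s i * y i) * (w s j * y j))"
    by (intro sum.cong refl) (simp add: sum_distrib_left sum_distrib_right mult_ac)
  also have "\<dots> = (\<Sum>i<n. \<Sum>s\<in>P. \<Sum>j<n. (w s i * y i) * (w s j * y j))"
    by (intro sum.cong refl) (rule sum.swap)
  also have "\<dots> = (\<Sum>s\<in>P. \<Sum>i<n. \<Sum>j<n. (w s i * y i) * (w s j * y j))"
    by (rule sum.swap)
  also have "\<dots> = (\<Sum>s\<in>P. (\<Sum>i<n. w s i * y i)^2)"
    by (simp add: power2_eq_square sum_product)
  also have "\<dots> \<ge> 0" by (intro sum_nonneg) auto
  finally show ?thesis .
qed

lemma rayleigh_mat:
  fixes A :: "real mat"
  assumes A: "A \<in> carrier_mat n n" and sym: "transpose_mat A = A"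
    and mx: "\<forall>mu. eigenvalue A mu \<longrightarrow> mu \<le> lam"
    and x: "x \<in> carrier_vec n"
  shows "x \<bullet> (A *\<^sub>v x) \<le> lam * (x \<bullet> x)"
proof -
  have s: "A $$ (i, j) = A $$ (j, i)" if "i < n" "j < n" for i j
  proof -
    have "A $$ (i, j) = transpose_mat A $$ (i, j)" using sym by simp
    also have "\<dots> = A $$ (j, i)" using A that by simp
    finally show ?thesis .
  qed
  have "(\<Sum>i<n. \<Sum>j<n. A $$ (i, j) * (x $ i) * (x $ j)) \<le> lam * (\<Sum>i<n. (x $ i)^2)"
  proof (rule rayleigh_sum[where m = "\<lambda>i j. A $$ (i, j)"])
    show "A $$ (i, j) = A $$ (j, i)" if "i < n" "j < n" for i j using s that .
    fix mu and z :: "nat \<Rightarrow> real"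
    assume z1: "(\<Sum>i<n. (z i)^2) = 1" and ez: "\<And>i. i < n \<Longrightarrow> (\<Sum>j<n. A $$ (i, j) * z j) = mu * z i"
    define v where "v = vec n z"
    have v: "v \<in> carrier_vec n" unfolding v_def by simp
    have "v \<noteq> 0\<^sub>v n"
    proof
      assume "v = 0\<^sub>v n"
      then have "\<forall>i<n. z i = 0" unfolding v_def by (metis index_vec index_zero_vec(1))
      then have "(\<Sum>i<n. (z i)^2) = 0" by simp
      then show False using z1 by simp
    qed
    moreover have "A *\<^sub>v v = mu \<cdot>\<^sub>v v"
    proof (rule eq_vecI)
      show "dim_vec (A *\<^sub>v v) = dim_vec (mu \<cdot>\<^sub>v v)" using A v by simp
      fix i assume "i < dim_vec (mu \<cdot>\<^sub>v v)"
      then have i: "i < n" using v by simp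
      have "(A *\<^sub>v v) $ i = (\<Sum>j<n. A $$ (i, j) * z j)"
        using A i unfolding v_def by (simp add: scalar_prod_def row_def lessThan_atLeast0)
      also have "\<dots> = mu * z i" using ez i .
      finally show "(A *\<^sub>v v) $ i = (mu \<cdot>\<^sub>v v) $ i" using i unfolding v_def by simp
    qed
    ultimately have "eigenvector A v mu" unfolding eigenvector_def using A v by simp
    then have "eigenvalue A mu" unfolding eigenvalue_def by blast
    then show "mu \<le> lam" using mx by blast
  qed
  then show ?thesis using qf_sum[OF A x] nrm_sum[OF x] by simp
qed

theorem theorem2:
  fixes N nh nl :: nat and r :: "real vec" and sigma2 gamma2 lam1 :: real
    and Q :: "real mat" and v1 :: "real vec"
  assumes "N > 0" and "nh > 0" and "nl > 0"
    and r: "r \<in> carrier_vec N"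
    and invR: "invertible_mat (transpose_mat (Rmat N nh r) * Rmat N nh r)"
    and "sigma2 > 0"
    and Q: "Q \<in> carrier_mat (N * (N + nl - 1)) nl"
    and Q01: "\<forall>i j. i < N * (N + nl - 1) \<longrightarrow> j < nl \<longrightarrow> Q $$ (i, j) = 0 \<or> Q $$ (i, j) = 1"
    and Qvec: "\<forall>l \<in> carrier_vec nl. vec_cs (Lmat N nl l) = Q *\<^sub>v l"
    and "gamma2 > 0"
    and lam1: "eigenvalue (Mmat N nh nl r Q) lam1"
    and lam1_max: "\<forall>mu. eigenvalue (Mmat N nh nl r Q) mu \<longrightarrow> mu \<le> lam1"
    and v1: "eigenvector (Mmat N nh nl r Q) v1 lam1"
    and v1_unit: "v1 \<bullet> v1 = 1"
  shows
    "let M = Mmat N nh nl r Q;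
         c = mtrace (sigma2 \<cdot>\<^sub>m minv (transpose_mat (Rmat N nh r) * Rmat N nh r));
         J = (\<lambda>l. 1 / (l \<bullet> (M *\<^sub>v l) + c) + gamma2 * (l \<bullet> l));
         lstar = (if lam1 \<le> gamma2 * c\<^sup>2 then 0\<^sub>v nl
                  else sqrt (1 / sqrt (gamma2 * lam1) - c / lam1) \<cdot>\<^sub>v v1)
     in lstar \<in> carrier_vec nl \<and> (\<forall>l \<in> carrier_vec nl. J lstar \<le> J l)"
proof -
  define R where "R = Rmat N nh r"
  define A where "A = transpose_mat R * R"
  define G where "G = minv A"
  define B where "B = R * G"
  define E where "E = Emat N nh r"
  define m where "m = N + nl - 1"
  define K where "K = kron (1\<^sub>m m) E"
  define M where "M = Mmat N nh nl r Q"
  define c where "c = mtrace (sigma2 \<cdot>\<^sub>m minv (transpose_mat (Rmat N nh r) * Rmat N nh r))"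
  have R: "R \<in> carrier_mat N nh" unfolding R_def Rmat_def by simp
  have A: "A \<in> carrier_mat nh nh" unfolding A_def using R by simp
  have invA: "invertible_mat A" using invR unfolding A_def R_def .
  then obtain Bi where ABi: "A * Bi = 1\<^sub>m (dim_row A)" and BiA: "Bi * A = 1\<^sub>m (dim_row Bi)"
    unfolding invertible_mat_def inverts_mat_def by blast
  have "dim_col Bi = nh" using arg_cong[OF ABi, of dim_col] A by simp
  moreover have "dim_row Bi = nh" using arg_cong[OF BiA, of dim_col] A by simp
  ultimately have Bi: "Bi \<in> carrier_mat nh nh" by auto
  have "A \<in> Units (ring_mat TYPE(real) nh undefined)"
    unfolding Units_def ring_mat_def using A Bi ABi BiA by auto
  then obtain G' where "mat_inverse A = Some G'" using mat_inverse(1)[OF A] by fastforce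
  then have GG': "G = G'" and "A * G' = 1\<^sub>m nh \<and> G' * A = 1\<^sub>m nh \<and> G' \<in> carrier_mat nh nh"
    using mat_inverse(2)[OF A] unfolding G_def minv_def by auto
  then have AG: "A * G = 1\<^sub>m nh" and GA: "G * A = 1\<^sub>m nh" and G: "G \<in> carrier_mat nh nh" by auto
  have At: "transpose_mat A = A" unfolding A_def using R by (simp add: transpose_mult[OF _ R])
  have Gt: "transpose_mat G = G"
  proof -
    have "transpose_mat (A * G) = 1\<^sub>m nh" using AG by simp
    then have tGA: "transpose_mat G * A = 1\<^sub>m nh" using transpose_mult[OF A G] At by simp
    have "transpose_mat G = transpose_mat G * (A * G)" using AG G by simp
    also have "\<dots> = (transpose_mat G * A) * G" using G A by (simp add: assoc_mult_mat[of _ nh nh _ nh _ nh])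
    also have "\<dots> = G" using tGA G by simp
    finally show ?thesis .
  qed
  have B: "B \<in> carrier_mat N nh" unfolding B_def using R G by simp
  have Bt: "transpose_mat B = G * transpose_mat R"
    unfolding B_def using transpose_mult[OF R G] Gt by simp
  have E_eq: "E = B * transpose_mat B"
  proof -
    have "E = R * (G * G) * transpose_mat R" unfolding E_def Emat_def Let_def R_def[symmetric]
      A_def[symmetric] G_def[symmetric] ..
    also have "\<dots> = R * G * (G * transpose_mat R)"
      using R G by (simp add: assoc_mult_mat[of _ N nh _ nh _ N] assoc_mult_mat[of _ N nh _ nh _ nh])
    finally have "E = R * G * (G * transpose_mat R)" .
    then show ?thesis using Bt unfolding B_def by simp
  qed
  have E: "E \<in> carrier_mat N N" unfolding E_eq using B by simp
  have Eent: "E $$ (a, b) = (\<Sum>p<nh. B $$ (a, p) * B $$ (b, p))" if "a < N" "b < N" for a b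
    unfolding E_eq using B that by (simp add: scalar_prod_def lessThan_atLeast0 col_def row_def)
  have Esym: "E $$ (a, b) = E $$ (b, a)" if "a < N" "b < N" for a b
    using Eent[OF that] Eent[OF that(2,1)] by (simp add: mult.commute)
  have K: "K \<in> carrier_mat (m * N) (m * N)" unfolding K_def kron_def using E by simp
  have Kent: "K $$ (i, j) = (if i div N = j div N then E $$ (i mod N, j mod N) else 0)"
    if "i < m * N" "j < m * N" for i j
  proof -
    have "i div N < m" "j div N < m" using that by (auto simp: less_mult_imp_div_less)
    moreover have "i mod N < N" "j mod N < N" using \<open>N > 0\<close> by auto
    ultimately show ?thesis unfolding K_def kron_def using E that by simp
  qed
  have Q': "Q \<in> carrier_mat (m * N) nl" using Q unfolding m_def by (simp add: mult.commute)
  have M_eq: "M = transpose_mat Q * K * Q" unfolding M_def Mmat_def K_def E_def m_def ..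
  have M: "M \<in> carrier_mat nl nl" unfolding M_eq using Q' K by simp
  have Kt: "transpose_mat K = K"
  proof (rule eq_matI)
    show "dim_row (transpose_mat K) = dim_row K" "dim_col (transpose_mat K) = dim_col K" using K by auto
    fix i j assume "i < dim_row K" "j < dim_col K"
    then have ij: "i < m * N" "j < m * N" using K by auto
    have "i mod N < N" "j mod N < N" using \<open>N > 0\<close> by auto
    then show "transpose_mat K $$ (i, j) = K $$ (i, j)"
      using K ij Kent[OF ij] Kent[OF ij(2,1)] Esym by auto
  qed
  have Mt: "transpose_mat M = M"
  proof -
    have QT: "transpose_mat Q \<in> carrier_mat nl (m * N)" using Q' by simp
    have P: "transpose_mat Q * K \<in> carrier_mat nl (m * N)" using QT K by simp
    have "transpose_mat M = transpose_mat Q * transpose_mat (transpose_mat Q * K)"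
      unfolding M_eq by (rule transpose_mult[OF P Q'])
    also have "transpose_mat (transpose_mat Q * K) = transpose_mat K * Q"
      using transpose_mult[OF QT K] by simp
    also have "transpose_mat Q * (transpose_mat K * Q) = M" unfolding M_eq Kt using QT K Q' by simp
    finally show ?thesis .
  qed
  have psd: "l \<bullet> (M *\<^sub>v l) \<ge> 0" if l: "l \<in> carrier_vec nl" for l
  proof -
    define y where "y = Q *\<^sub>v l"
    have y: "y \<in> carrier_vec (m * N)" unfolding y_def using Q' l by simp
    have QT: "transpose_mat Q \<in> carrier_mat nl (m * N)" using Q' by simp
    have KQ: "K * Q \<in> carrier_mat (m * N) nl" using K Q' by simp
    have "M *\<^sub>v l = (transpose_mat Q * K * Q) *\<^sub>v l" unfolding M_eq ..
    also have "\<dots> = (transpose_mat Q * (K * Q)) *\<^sub>v l" by (subst assoc_mult_mat[OF QT K Q']) (rule refl)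
    also have "\<dots> = transpose_mat Q *\<^sub>v ((K * Q) *\<^sub>v l)" by (rule assoc_mult_mat_vec[OF QT KQ l])
    also have "(K * Q) *\<^sub>v l = K *\<^sub>v y" unfolding y_def by (rule assoc_mult_mat_vec[OF K Q' l])
    finally have "M *\<^sub>v l = transpose_mat Q *\<^sub>v (K *\<^sub>v y)" .
    moreover have zc: "K *\<^sub>v y \<in> carrier_vec (m * N)" using K y by simp
    moreover have wc: "transpose_mat Q *\<^sub>v (K *\<^sub>v y) \<in> carrier_vec nl" by (rule mult_mat_vec_carrier[OF QT zc])
    moreover have "(transpose_mat Q *\<^sub>v (K *\<^sub>v y)) \<bullet> l = (K *\<^sub>v y) \<bullet> y"
      using transpose_vec_mult_scalar[OF Q' l zc] unfolding y_def .
    ultimately have "l \<bullet> (M *\<^sub>v l) = y \<bullet> (K *\<^sub>v y)"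
      using comm_scalar_prod[OF l wc] comm_scalar_prod[OF zc y] by simp
    also have "\<dots> = (\<Sum>i<m*N. \<Sum>j<m*N. K $$ (i, j) * y $ i * y $ j)" by (rule qf_sum[OF K y])
    also have "\<dots> = (\<Sum>i<m*N. \<Sum>j<m*N. (\<Sum>s\<in>{..<m} \<times> {..<nh}.
         (\<lambda>(b,p) i. if i div N = b then B $$ (i mod N, p) else 0) s i *
         (\<lambda>(b,p) i. if i div N = b then B $$ (i mod N, p) else 0) s j) * y $ i * y $ j)"
    proof (intro sum.cong refl)
      fix i j assume "i \<in> {..<m*N}" "j \<in> {..<m*N}"
      then have ij: "i < m * N" "j < m * N" by auto
      have idm: "i div N < m" using ij by (auto simp: less_mult_imp_div_less)
      have im: "i mod N < N" "j mod N < N" using \<open>N > 0\<close> by auto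
      have "(\<Sum>s\<in>{..<m} \<times> {..<nh}.
         (\<lambda>(b,p) i. if i div N = b then B $$ (i mod N, p) else 0) s i *
         (\<lambda>(b,p) i. if i div N = b then B $$ (i mod N, p) else 0) s j)
        = (\<Sum>b<m. \<Sum>p<nh. (if i div N = b then B $$ (i mod N, p) else 0) *
               (if j div N = b then B $$ (j mod N, p) else 0))"
        by (subst sum.cartesian_product) (intro sum.cong refl, auto)
      also have "\<dots> = (\<Sum>b<m. if b = i div N then (if i div N = j div N then E $$ (i mod N, j mod N) else 0) else 0)"
        by (intro sum.cong refl) (auto simp: Eent[OF im])
      also have "\<dots> = K $$ (i, j)" using idm Kent[OF ij] by simp
      finally show "K $$ (i, j) * y $ i * y $ j = (\<Sum>s\<in>{..<m} \<times> {..<nh}.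
         (\<lambda>(b,p) i. if i div N = b then B $$ (i mod N, p) else 0) s i *
         (\<lambda>(b,p) i. if i div N = b then B $$ (i mod N, p) else 0) s j) * y $ i * y $ j" by simp
    qed
    also have "\<dots> \<ge> 0" by (rule psd_sum) simp
    finally show ?thesis .
  qed
  have ray: "l \<bullet> (M *\<^sub>v l) \<le> lam1 * (l \<bullet> l)" if l: "l \<in> carrier_vec nl" for l
    by (rule rayleigh_mat[OF M Mt _ l]) (use lam1_max in \<open>simp add: M_def\<close>)
  have v1c: "v1 \<in> carrier_vec nl" using v1 M unfolding eigenvector_def M_def[symmetric] by simp
  have Mv1: "M *\<^sub>v v1 = lam1 \<cdot>\<^sub>v v1" using v1 unfolding eigenvector_def M_def by simp
  have lam_nn: "lam1 \<ge> 0"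
  proof -
    have "v1 \<bullet> (M *\<^sub>v v1) = lam1" using Mv1 v1c v1_unit by simp
    then show ?thesis using psd[OF v1c] by simp
  qed
  have cG: "c = mtrace (sigma2 \<cdot>\<^sub>m G)" unfolding c_def G_def A_def R_def ..
  have GBB: "G = transpose_mat B * B"
  proof -
    have "transpose_mat B * B = G * transpose_mat R * (R * G)" by (simp only: Bt) (simp only: B_def)
    also have "\<dots> = G * (transpose_mat R * R) * G"
    proof -
      have RT: "transpose_mat R \<in> carrier_mat nh N" using R by simp
      have RG: "R * G \<in> carrier_mat N nh" using R G by simp
      have RR: "transpose_mat R * R \<in> carrier_mat nh nh" using R by simp
      show ?thesis using assoc_mult_mat[OF G RT RG] assoc_mult_mat[OF RT R G] assoc_mult_mat[OF G RR G]
        by simp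
    qed
    also have "\<dots> = G" using GA G unfolding A_def[symmetric] by simp
    finally show ?thesis by simp
  qed
  have Gent: "G $$ (i, j) = (\<Sum>k<N. B $$ (k, i) * B $$ (k, j))" if "i < nh" "j < nh" for i j
  proof -
    have "G $$ (i, j) = (transpose_mat B * B) $$ (i, j)" using GBB by simp
    also have "\<dots> = (\<Sum>k<N. B $$ (k, i) * B $$ (k, j))"
      using B that by (simp add: scalar_prod_def lessThan_atLeast0 col_def row_def)
    finally show ?thesis .
  qed
  have Gdiag: "G $$ (i, i) > 0" if i: "i < nh" for i
  proof -
    have nn: "G $$ (i, i) \<ge> 0" unfolding Gent[OF i i] by (intro sum_nonneg) auto
    have "G $$ (i, i) \<noteq> 0"
    proof
      assume "G $$ (i, i) = 0"
      then have "\<forall>k\<in>{..<N}. B $$ (k, i) * B $$ (k, i) = 0" unfolding Gent[OF i i]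
        by (subst sum_nonneg_eq_0_iff[symmetric]) auto
      then have Bz: "\<And>k. k < N \<Longrightarrow> B $$ (k, i) = 0" by auto
      have Gz: "G $$ (i, j) = 0" if "j < nh" for j unfolding Gent[OF i that] using Bz by simp
      have "(G * A) $$ (i, i) = (\<Sum>j<nh. G $$ (i, j) * A $$ (j, i))"
        using G A i by (simp add: scalar_prod_def lessThan_atLeast0 col_def row_def)
      also have "\<dots> = 0" using Gz by simp
      finally show False using GA i by simp
    qed
    then show ?thesis using nn by simp
  qed
  have cpos: "c > 0"
  proof -
    have "c = (\<Sum>i<nh. sigma2 * G $$ (i, i))" unfolding cG mtrace_def using G
      by (intro sum.cong) auto
    also have "\<dots> > 0" using \<open>nh > 0\<close> \<open>sigma2 > 0\<close> Gdiag by (intro sum_pos) auto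
    finally show ?thesis .
  qed
  have xnn: "l \<bullet> l \<ge> 0" if "l \<in> carrier_vec nl" for l :: "real vec"
    unfolding nrm_sum[OF that] by (intro sum_nonneg) auto
  show ?thesis
  proof (cases "lam1 \<le> gamma2 * c\<^sup>2")
    case True
    have z: "0\<^sub>v nl \<bullet> (M *\<^sub>v 0\<^sub>v nl) = 0" using M by simp
    have "\<forall>l\<in>carrier_vec nl. 1 / (0\<^sub>v nl \<bullet> (M *\<^sub>v 0\<^sub>v nl) + c) \<le> 1 / (l \<bullet> (M *\<^sub>v l) + c) + gamma2 * (l \<bullet> l)"
    proof
      fix l :: "real vec" assume l: "l \<in> carrier_vec nl"
      show "1 / (0\<^sub>v nl \<bullet> (M *\<^sub>v 0\<^sub>v nl) + c) \<le> 1 / (l \<bullet> (M *\<^sub>v l) + c) + gamma2 * (l \<bullet> l)"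
        unfolding z using arith_a[OF cpos \<open>gamma2 > 0\<close> lam_nn psd[OF l] ray[OF l] xnn[OF l] True] by simp
    qed
    then show ?thesis using True unfolding Let_def M_def[symmetric] c_def[symmetric] by simp
  next
    case False
    define s where "s = sqrt (1 / sqrt (gamma2 * lam1) - c / lam1)"
    have q1: "(s \<cdot>\<^sub>v v1) \<bullet> (M *\<^sub>v (s \<cdot>\<^sub>v v1)) = s^2 * lam1"
      using M v1c Mv1 v1_unit by (simp add: mult_mat_vec power2_eq_square)
    have q2: "(s \<cdot>\<^sub>v v1) \<bullet> (s \<cdot>\<^sub>v v1) = s^2"
      using v1c v1_unit by (simp add: power2_eq_square)
    show ?thesis using False v1c unfolding Let_def M_def[symmetric] c_def[symmetric]
      by (simp add: q1 q2 s_def[symmetric] arith_b[OF cpos \<open>gamma2 > 0\<close> psd ray xnn False, unfolded s_def[symmetric]])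
  qed
qed

end
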